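(* Let $(X_i)_{i\in\mathbb{Z}}$ be a stationary strongly nonergodic process over a finite alphabet $\mathbb{X}$. Suppose that for some $\beta\in(0,1)$ and $\delta\in(\tfrac12,1)$, and for some IID binary process $(Z_k)_{k\in\mathbb{N}}$ with $P(Z_k=0)=P(Z_k=1)=\tfrac12$ and functions $s_k:\mathbb{X}^*\to\{0,1\}$ satisfying $\lim_{n\to\infty}P(s_k(X_{t+1:t+n})=Z_k)=1$ for all $k\in\mathbb{N}$, $t\in\mathbb{Z}$, the sets $U_\delta(n):=\{k\in\mathbb{N}: P(s_k(X_{1:n})=Z_k)\ge\delta\}$ satisfy $\liminf_{n\to\infty}\operatorname{card}U_\delta(n)/n^\beta>0$. Then $$\limsup_{n\to\infty}\frac{E(n)}{n^\beta}>0,$$ where $E(n):=2H(n)-H(2n)=I(X_{1:n};X_{n+1:2n})$.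
   Context: $X_{m:n}:=(X_i)_{m\le i\le n}$. $H(n):=H(X_{t+1:t+n})=-\mathbb{E}\log P(X_{t+1:t+n})$ is the block entropy (natural logarithm). A process is strongly nonergodic if there exist an IID binary process $(Z_k)_{k\in\mathbb{N}}$ with $P(Z_k=0)=P(Z_k=1)=\frac12$ and functions $s_k:\mathbb{X}^*\to\{0,1\}$ with $\lim_{n\to\infty}P(s_k(X_{t+1:t+n})=Z_k)=1$ for all $t\in\mathbb{Z}$, $k\in\mathbb{N}$. *)

theory Defs
  imports "HOL-Probability.Probability"
begin

definition block :: "(int \<Rightarrow> 'w \<Rightarrow> 'x) \<Rightarrow> int \<Rightarrow> nat \<Rightarrow> 'w \<Rightarrow> 'x list" where
  "block X t n \<omega> = map (\<lambda>i. X (t + 1 + int i) \<omega>) [0..<n]"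

definition stationary_proc :: "'w measure \<Rightarrow> (int \<Rightarrow> 'w \<Rightarrow> 'x) \<Rightarrow> bool" where
  "stationary_proc M X \<longleftrightarrow>
     (\<forall>t n w. measure M {\<omega>\<in>space M. block X t n \<omega> = w} = measure M {\<omega>\<in>space M. block X 0 n \<omega> = w})"

definition block_entropy :: "'w measure \<Rightarrow> (int \<Rightarrow> 'w \<Rightarrow> 'x::finite) \<Rightarrow> nat \<Rightarrow> real" where
  "block_entropy M X n =
     - (\<Sum>w\<in>{w::'x list. length w = n}.
          measure M {\<omega>\<in>space M. block X 0 n \<omega> = w} * ln (measure M {\<omega>\<in>space M. block X 0 n \<omega> = w}))"

definition excess_entropy :: "'w measure \<Rightarrow> (int \<Rightarrow> 'w \<Rightarrow> 'x::finite) \<Rightarrow> nat \<Rightarrow> real" where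
  "excess_entropy M X n = 2 * block_entropy M X n - block_entropy M X (2 * n)"

definition ecard :: "'a set \<Rightarrow> ereal" where
  "ecard A = (if finite A then ereal (real (card A)) else \<infinity>)"

end

theory Submission
  imports Defs
begin

definition ent :: "'w measure \<Rightarrow> ('w \<Rightarrow> 'a) \<Rightarrow> real" where
  "ent M f = - (\<Sum>a\<in>f`space M. measure M (f -` {a} \<inter> space M) * ln (measure M (f -` {a} \<inter> space M)))"

lemma ent_fibers:
  "ent M f = - (\<Sum>F\<in>(\<lambda>\<omega>. {\<omega>'\<in>space M. f \<omega>' = f \<omega>}) ` space M. measure M F * ln (measure M F))"
proof -
  have img: "(\<lambda>\<omega>. {\<omega>'\<in>space M. f \<omega>' = f \<omega>}) ` space M = (\<lambda>a. f -` {a} \<inter> space M) ` (f ` space M)"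
    by (auto simp: image_image intro!: image_cong)
  have inj: "inj_on (\<lambda>a. f -` {a} \<inter> space M) (f ` space M)"
    by (auto simp: inj_on_def)
  show ?thesis unfolding ent_def img sum.reindex[OF inj] by (simp add: o_def)
qed

lemma ent_eq:
  assumes "\<And>\<omega> \<omega>'. \<omega> \<in> space M \<Longrightarrow> \<omega>' \<in> space M \<Longrightarrow> f \<omega> = f \<omega>' \<longleftrightarrow> g \<omega> = g \<omega>'"
  shows "ent M f = ent M g"
proof -
  have "(\<lambda>\<omega>. {\<omega>'\<in>space M. f \<omega>' = f \<omega>}) ` space M = (\<lambda>\<omega>. {\<omega>'\<in>space M. g \<omega>' = g \<omega>}) ` space M"
    using assms by (intro image_cong refl) blast
  then show ?thesis unfolding ent_fibers[of M f] ent_fibers[of M g] by simp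
qed

lemma ent_superset:
  assumes "finite A" "f ` space M \<subseteq> A"
  shows "ent M f = - (\<Sum>a\<in>A. measure M (f -` {a} \<inter> space M) * ln (measure M (f -` {a} \<inter> space M)))"
  unfolding ent_def
proof (intro arg_cong[where f=uminus] sum.mono_neutral_left assms ballI)
  fix a assume "a \<in> A - f ` space M"
  then have "f -` {a} \<inter> space M = {}" by auto
  then show "measure M (f -` {a} \<inter> space M) * ln (measure M (f -` {a} \<inter> space M)) = 0" by simp
qed

lemma (in prob_space) marg:
  assumes f: "simple_function M f"
  shows "(\<Sum>a\<in>f`space M. prob (f -` {a} \<inter> space M) * g (\<pi> a))
       = (\<Sum>u\<in>(\<lambda>\<omega>. \<pi> (f \<omega>))`space M. prob ((\<lambda>\<omega>. \<pi> (f \<omega>)) -` {u} \<inter> space M) * g u)"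
proof -
  have fin: "finite (f ` space M)" using f by (simp add: simple_functionD)
  have img: "(\<lambda>\<omega>. \<pi> (f \<omega>))`space M = \<pi> ` (f ` space M)" by (simp add: image_image)
  have "(\<Sum>a\<in>f`space M. prob (f -` {a} \<inter> space M) * g (\<pi> a))
     = (\<Sum>u\<in>\<pi> ` (f ` space M). \<Sum>a\<in>{a\<in>f`space M. \<pi> a = u}. prob (f -` {a} \<inter> space M) * g (\<pi> a))"
    by (rule sum.image_gen[OF fin])
  also have "\<dots> = (\<Sum>u\<in>\<pi> ` (f ` space M). prob ((\<lambda>\<omega>. \<pi> (f \<omega>)) -` {u} \<inter> space M) * g u)"
  proof (rule sum.cong[OF refl])
    fix u assume u: "u \<in> \<pi> ` (f ` space M)"
    have "(\<Sum>a\<in>{a\<in>f`space M. \<pi> a = u}. prob (f -` {a} \<inter> space M) * g (\<pi> a))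
        = (\<Sum>a\<in>{a\<in>f`space M. \<pi> a = u}. prob (f -` {a} \<inter> space M)) * g u"
      by (simp add: sum_distrib_right)
    also have "(\<Sum>a\<in>{a\<in>f`space M. \<pi> a = u}. prob (f -` {a} \<inter> space M))
        = prob (\<Union>a\<in>{a\<in>f`space M. \<pi> a = u}. f -` {a} \<inter> space M)"
      by (rule measure_finite_Union[symmetric]) (use fin f in \<open>auto simp: disjoint_family_on_def simple_functionD\<close>)
    also have "(\<Union>a\<in>{a\<in>f`space M. \<pi> a = u}. f -` {a} \<inter> space M) = (\<lambda>\<omega>. \<pi> (f \<omega>)) -` {u} \<inter> space M"
      by auto
    finally show "(\<Sum>a\<in>{a\<in>f`space M. \<pi> a = u}. prob (f -` {a} \<inter> space M) * g (\<pi> a))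
        = prob ((\<lambda>\<omega>. \<pi> (f \<omega>)) -` {u} \<inter> space M) * g u" .
  qed
  finally show ?thesis unfolding img .
qed

context prob_space begin

lemma ent_simple: "ent M f = - (\<Sum>a\<in>f`space M. prob (f -` {a} \<inter> space M) * ln (prob (f -` {a} \<inter> space M)))"
  by (simp add: ent_def)

lemma ent_mono_pair:
  assumes X: "simple_function M X" and Y: "simple_function M Y"
  shows "ent M Y \<le> ent M (\<lambda>\<omega>. (X \<omega>, Y \<omega>))"
proof -
  let ?T = "\<lambda>\<omega>. (X \<omega>, Y \<omega>)"
  have T: "simple_function M ?T" using X Y by (rule simple_function_Pair)
  let ?p = "\<lambda>t. prob (?T -` {t} \<inter> space M)"
  let ?q = "\<lambda>y. prob (Y -` {y} \<inter> space M)"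
  have m: "(\<Sum>t\<in>?T`space M. ?p t * ln (?q (snd t))) = (\<Sum>u\<in>Y`space M. ?q u * ln (?q u))"
    using marg[OF T, of "\<lambda>u. ln (?q u)" snd] by simp
  have "(\<Sum>t\<in>?T`space M. ?p t * ln (?p t)) \<le> (\<Sum>t\<in>?T`space M. ?p t * ln (?q (snd t)))"
  proof (rule sum_mono)
    fix t assume t: "t \<in> ?T`space M"
    have le: "?p t \<le> ?q (snd t)"
      using T Y t by (intro finite_measure_mono) (auto simp: simple_functionD)
    show "?p t * ln (?p t) \<le> ?p t * ln (?q (snd t))"
    proof (cases "?p t = 0")
      case False
      then have "0 < ?p t" using measure_nonneg[of M] by (simp add: less_le)
      then show ?thesis using le by (intro mult_left_mono) auto
    qed simp
  qed
  then show ?thesis unfolding ent_simple m by simp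
qed

lemma ent_submod:
  assumes X: "simple_function M X" and Y: "simple_function M Y" and Z: "simple_function M Z"
  shows "ent M (\<lambda>\<omega>. (X \<omega>, Y \<omega>, Z \<omega>)) + ent M Z \<le> ent M (\<lambda>\<omega>. (X \<omega>, Z \<omega>)) + ent M (\<lambda>\<omega>. (Y \<omega>, Z \<omega>))"
proof -
  interpret I: information_space M "exp 1" by unfold_locales simp
  let ?T = "\<lambda>\<omega>. (X \<omega>, Y \<omega>, Z \<omega>)"
  let ?XZ = "\<lambda>\<omega>. (X \<omega>, Z \<omega>)"
  let ?YZ = "\<lambda>\<omega>. (Y \<omega>, Z \<omega>)"
  have T: "simple_function M ?T" using X Y Z by (intro simple_function_Pair)
  have XZ: "simple_function M ?XZ" using X Z by (intro simple_function_Pair)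
  have YZ: "simple_function M ?YZ" using Y Z by (intro simple_function_Pair)
  let ?p = "\<lambda>t. prob (?T -` {t} \<inter> space M)"
  let ?a = "\<lambda>t. prob (?XZ -` {t} \<inter> space M)"
  let ?c = "\<lambda>t. prob (?YZ -` {t} \<inter> space M)"
  let ?d = "\<lambda>t. prob (Z -` {t} \<inter> space M)"
  have "0 \<le> conditional_mutual_information (exp 1) (count_space (X ` space M)) (count_space (Y ` space M)) (count_space (Z ` space M)) X Y Z"
    by (rule I.conditional_mutual_information_nonneg[OF X Y Z])
  also have "\<dots> = (\<Sum>(x, y, z)\<in>?T`space M. ?p (x, y, z) * log (exp 1) (?p (x, y, z) / (?a (x, z) * (?c (y,z) / ?d z))))"
    by (rule I.conditional_mutual_information_eq;
        rule simple_distributedI[OF _ _ refl]; (fact | simp add: measure_nonneg))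
  also have "\<dots> = (\<Sum>t\<in>?T`space M. ?p t * ln (?p t) - ?p t * ln (?a (fst t, snd (snd t)))
       - ?p t * ln (?c (snd t)) + ?p t * ln (?d (snd (snd t))))"
  proof (rule sum.cong[OF refl], goal_cases)
    case (1 t)
    then obtain \<omega> where \<omega>: "\<omega> \<in> space M" and t: "t = (X \<omega>, Y \<omega>, Z \<omega>)" by auto
    let ?t = "(X \<omega>, Y \<omega>, Z \<omega>)"
    have sets: "?T -` {?t} \<inter> space M \<in> sets M" "?XZ -` {(X \<omega>, Z \<omega>)} \<inter> space M \<in> sets M"
       "?YZ -` {(Y \<omega>, Z \<omega>)} \<inter> space M \<in> sets M" "Z -` {Z \<omega>} \<inter> space M \<in> sets M"
      using T XZ YZ Z \<omega> by (auto simp: simple_functionD)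
    have le: "?p ?t \<le> ?a (X \<omega>, Z \<omega>)" "?p ?t \<le> ?c (Y \<omega>, Z \<omega>)" "?p ?t \<le> ?d (Z \<omega>)"
      using sets by (auto intro!: finite_measure_mono)
    have "?p ?t * log (exp 1) (?p ?t / (?a (X \<omega>, Z \<omega>) * (?c (Y \<omega>, Z \<omega>) / ?d (Z \<omega>)))) =
          ?p ?t * ln (?p ?t) - ?p ?t * ln (?a (X \<omega>, Z \<omega>)) - ?p ?t * ln (?c (Y \<omega>, Z \<omega>)) + ?p ?t * ln (?d (Z \<omega>))"
    proof (cases "?p ?t = 0")
      case False
      then have pos: "0 < ?p ?t" using measure_nonneg[of M] by (simp add: less_le)
      then have "0 < ?a (X \<omega>, Z \<omega>)" "0 < ?c (Y \<omega>, Z \<omega>)" "0 < ?d (Z \<omega>)" using le by linarith+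
      with pos show ?thesis
        by (simp add: log_def ln_div ln_mult algebra_simps)
    qed simp
    then show ?case using t by simp
  qed
  also have "\<dots> = (\<Sum>t\<in>?T`space M. ?p t * ln (?p t)) - (\<Sum>t\<in>?T`space M. ?p t * ln (?a (fst t, snd (snd t))))
       - (\<Sum>t\<in>?T`space M. ?p t * ln (?c (snd t))) + (\<Sum>t\<in>?T`space M. ?p t * ln (?d (snd (snd t))))"
    by (simp add: sum.distrib sum_subtractf)
  also have "(\<Sum>t\<in>?T`space M. ?p t * ln (?a (fst t, snd (snd t)))) = - ent M ?XZ"
    using marg[OF T, of "\<lambda>u. ln (?a u)" "\<lambda>t. (fst t, snd (snd t))"] by (simp add: ent_simple)
  also have "(\<Sum>t\<in>?T`space M. ?p t * ln (?c (snd t))) = - ent M ?YZ"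
    using marg[OF T, of "\<lambda>u. ln (?c u)" "snd"] by (simp add: ent_simple)
  also have "(\<Sum>t\<in>?T`space M. ?p t * ln (?d (snd (snd t)))) = - ent M Z"
    using marg[OF T, of "\<lambda>u. ln (?d u)" "\<lambda>t. snd (snd t)"] by (simp add: ent_simple)
  also have "(\<Sum>t\<in>?T`space M. ?p t * ln (?p t)) = - ent M ?T"
    by (simp add: ent_simple)
  finally show ?thesis by simp
qed

end

definition hb :: "real \<Rightarrow> real" where "hb p = - (p * ln p + (1 - p) * ln (1 - p))"

lemma hb_deriv:
  assumes "0 < x" "x < 1"
  shows "(hb has_real_derivative (ln (1 - x) - ln x)) (at x)"
proof -
  have d1: "((\<lambda>z. z * ln z) has_real_derivative ln x + 1) (at x)"
    using assms by (auto intro!: derivative_eq_intros)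
  have d2: "((\<lambda>z. (1 - z) * ln (1 - z)) has_real_derivative - ln (1 - x) - 1) (at x)"
    using assms by (auto intro!: derivative_eq_intros)
  have "((\<lambda>p. - (p * ln p + (1 - p) * ln (1 - p))) has_real_derivative - ((ln x + 1) + (- ln (1 - x) - 1))) (at x)"
    by (intro DERIV_minus DERIV_add d1 d2)
  then show ?thesis unfolding hb_def[abs_def] by simp
qed

lemma hb_nonneg: "0 \<le> q \<Longrightarrow> q \<le> 1 \<Longrightarrow> 0 \<le> hb q"
  unfolding hb_def
proof -
  assume q: "0 \<le> q" "q \<le> 1"
  have "q * ln q \<le> 0"
    using q by (cases "q = 0") (auto intro!: mult_nonneg_nonpos)
  moreover have "(1 - q) * ln (1 - q) \<le> 0"
    using q by (cases "q = 1") (auto intro!: mult_nonneg_nonpos)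
  ultimately show "0 \<le> - (q * ln q + (1 - q) * ln (1 - q))" by simp
qed

lemma hb_mono:
  assumes "0 \<le> p" "p \<le> q" "q \<le> 1/2"
  shows "hb p \<le> hb q"
proof (cases "p = 0")
  case True
  then show ?thesis using hb_nonneg[of q] assms by (simp add: hb_def)
next
  case False
  then have p: "0 < p" using assms by simp
  show ?thesis
  proof (rule DERIV_nonneg_imp_nondecreasing[OF assms(2)])
    fix x assume x: "p \<le> x" "x \<le> q"
    show "\<exists>y. DERIV hb x :> y \<and> 0 \<le> y"
      using x p assms by (intro exI[of _ "ln (1 - x) - ln x"]) (auto intro!: hb_deriv)
  qed
qed

lemma hb_half: "hb (1/2) = ln 2"
  by (simp add: hb_def ln_div)

lemma hb_lt:
  assumes "0 \<le> q" "q < 1/2"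
  shows "hb q < ln 2"
proof -
  consider "q = 0" | "0 < q" using assms by linarith
  then show ?thesis
  proof cases
    case 1 then show ?thesis by (simp add: hb_def)
  next
    case 2
    obtain z where z: "q < z" "z < 1/2" and eq: "hb (1/2) - hb q = (1/2 - q) * (ln (1 - z) - ln z)"
      using MVT2[of q "1/2" hb "\<lambda>x. ln (1 - x) - ln x"] assms 2 hb_deriv by force
    have "ln z < ln (1 - z)" using z 2 by simp
    then have "0 < (1/2 - q) * (ln (1 - z) - ln z)" using assms by simp
    then show ?thesis using eq hb_half by simp
  qed
qed

context prob_space begin

lemma ent_const: "ent M (\<lambda>\<omega>. c) = 0"
proof -
  have ne: "space M \<noteq> {}" using not_empty .
  then have "(\<lambda>\<omega>. c) ` space M = {c}" by auto
  then show ?thesis by (simp add: ent_def prob_space)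
qed

lemma ent_swap: "ent M (\<lambda>\<omega>. (X \<omega>, Y \<omega>)) = ent M (\<lambda>\<omega>. (Y \<omega>, X \<omega>))"
  by (rule ent_eq) auto

lemma ent_subadd:
  assumes X: "simple_function M X" and Y: "simple_function M Y"
  shows "ent M (\<lambda>\<omega>. (X \<omega>, Y \<omega>)) \<le> ent M X + ent M Y"
proof -
  have c: "simple_function M (\<lambda>\<omega>. ())" by simp
  have "ent M (\<lambda>\<omega>. (X \<omega>, Y \<omega>, ())) + ent M (\<lambda>\<omega>. ()) \<le> ent M (\<lambda>\<omega>. (X \<omega>, ())) + ent M (\<lambda>\<omega>. (Y \<omega>, ()))"
    by (rule ent_submod[OF X Y c])
  moreover have "ent M (\<lambda>\<omega>. (X \<omega>, Y \<omega>, ())) = ent M (\<lambda>\<omega>. (X \<omega>, Y \<omega>))" by (rule ent_eq) auto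
  moreover have "ent M (\<lambda>\<omega>. (X \<omega>, ())) = ent M X" by (rule ent_eq) auto
  moreover have "ent M (\<lambda>\<omega>. (Y \<omega>, ())) = ent M Y" by (rule ent_eq) auto
  ultimately show ?thesis using ent_const[of "()"] by simp
qed

lemma ent_bool:
  fixes D :: "'a \<Rightarrow> bool"
  assumes D: "simple_function M D"
  shows "ent M D = hb (prob {\<omega>\<in>space M. D \<omega>})"
proof -
  have s: "{\<omega>\<in>space M. D \<omega>} \<in> sets M"
    using simple_functionD(2)[OF D, of "{True}"] by (simp add: vimage_def Int_def conj_commute)
  have e1: "D -` {True} \<inter> space M = {\<omega>\<in>space M. D \<omega>}" by auto
  have e2: "D -` {False} \<inter> space M = space M - {\<omega>\<in>space M. D \<omega>}" by auto
  have "ent M D = - (\<Sum>a\<in>UNIV. prob (D -` {a} \<inter> space M) * ln (prob (D -` {a} \<inter> space M)))"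
    by (rule ent_superset) auto
  also have "\<dots> = hb (prob {\<omega>\<in>space M. D \<omega>})"
    unfolding UNIV_bool using s by (simp add: e1 e2 prob_compl hb_def)
  finally show ?thesis .
qed

end

lemma finite_len: "finite {w :: 'x::finite list. length w = n}"
  using finite_lists_length_eq[of "UNIV :: 'x set" n] by simp

lemma length_block[simp]: "length (block X t n \<omega>) = n"
  by (simp add: block_def)

lemma block_0[simp]: "block X t 0 \<omega> = []"
  by (simp add: block_def)

lemma block_Suc: "block X t (Suc n) \<omega> = block X t n \<omega> @ [X (t + 1 + int n) \<omega>]"
  by (simp add: block_def)

lemma block_add: "block X 0 (a + b) \<omega> = block X 0 a \<omega> @ block X (int a) b \<omega>"
  by (induction b) (auto simp: block_Suc algebra_simps)

lemma block_take: "n \<le> N \<Longrightarrow> block X t n \<omega> = take n (block X t N \<omega>)"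
  by (simp add: block_def take_map)

definition ZU :: "(nat \<Rightarrow> 'w \<Rightarrow> bool) \<Rightarrow> nat set \<Rightarrow> 'w \<Rightarrow> nat \<Rightarrow> bool" where
  "ZU Z U \<omega> = (\<lambda>k. if k \<in> U then Z k \<omega> else False)"

locale snp = prob_space M for M :: "'w measure" +
  fixes X :: "int \<Rightarrow> 'w \<Rightarrow> 'x::finite" and Z :: "nat \<Rightarrow> 'w \<Rightarrow> bool"
  assumes Xm: "\<And>i. X i \<in> measurable M (count_space UNIV)"
    and stat: "stationary_proc M X"
    and indep: "indep_vars (\<lambda>_. count_space UNIV) Z UNIV"
    and Zf: "\<And>k. prob {\<omega>\<in>space M. Z k \<omega> = False} = 1/2"
    and Zt: "\<And>k. prob {\<omega>\<in>space M. Z k \<omega> = True} = 1/2"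
begin

lemma sf_X: "simple_function M (X i)"
  unfolding simple_function_def
  using measurable_sets[OF Xm[of i]] by auto

lemma sf_block: "simple_function M (block X t n)"
proof (induction n)
  case 0
  then show ?case by (simp add: block_def)
next
  case (Suc n)
  have "simple_function M (\<lambda>\<omega>. (\<lambda>(a, b). a @ [b]) (block X t n \<omega>, X (t + 1 + int n) \<omega>))"
    by (rule simple_function_compose1[OF simple_function_Pair[OF Suc sf_X]])
  then show ?case by (simp add: block_Suc[abs_def])
qed

lemma Zm: "Z k \<in> measurable M (count_space UNIV)"
  using indep by (auto simp: indep_vars_def)

lemma sf_Z: "simple_function M (Z k)"
  unfolding simple_function_def
  using measurable_sets[OF Zm[of k]] by auto

lemma ZU_insert: "ZU Z (insert k U) \<omega> = (ZU Z U \<omega>)(k := Z k \<omega>)"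
  by (auto simp: ZU_def fun_eq_iff)

lemma sf_ZU: "finite U \<Longrightarrow> simple_function M (ZU Z U)"
proof (induction U rule: finite_induct)
  case empty
  then show ?case by (simp add: ZU_def)
next
  case (insert k U)
  have "simple_function M (\<lambda>\<omega>. (\<lambda>(a, b). a(k := b)) (ZU Z U \<omega>, Z k \<omega>))"
    by (rule simple_function_compose1[OF simple_function_Pair[OF insert(3) sf_Z]])
  then show ?case by (simp only: ZU_insert[abs_def] case_prod_conv)
qed

lemma st: "prob {\<omega>\<in>space M. block X t n \<omega> = w} = prob {\<omega>\<in>space M. block X 0 n \<omega> = w}"
  using stat unfolding stationary_proc_def by blast

lemma ent_block: "ent M (block X t n) = block_entropy M X n"
proof -
  have "ent M (block X t n) = - (\<Sum>w\<in>{w. length w = n}. prob (block X t n -` {w} \<inter> space M) * ln (prob (block X t n -` {w} \<inter> space M)))"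
    by (rule ent_superset) (auto simp: finite_len)
  also have "\<dots> = block_entropy M X n"
    unfolding block_entropy_def
    by (rule arg_cong[where f=uminus], rule sum.cong[OF refl]) (simp only: vimage_def Int_def conj_commute mem_Collect_eq st[of t] singleton_iff)
  finally show ?thesis .
qed

lemma block_ev: "{\<omega>\<in>space M. block X t N \<omega> = w} \<in> sets M"
  using simple_functionD(2)[OF sf_block[of t N], of "{w}"] by (simp add: vimage_def Int_def conj_commute)

lemma stat_event: "prob {\<omega>\<in>space M. P (block X t N \<omega>)} = prob {\<omega>\<in>space M. P (block X 0 N \<omega>)}"
proof -
  have fin: "finite {w. length w = N \<and> P w}"
    by (rule finite_subset[OF _ finite_len[of N]]) auto
  have "prob {\<omega>\<in>space M. P (block X t' N \<omega>)} = (\<Sum>w\<in>{w. length w = N \<and> P w}. prob {\<omega>\<in>space M. block X t' N \<omega> = w})" for t'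
  proof -
    have "{\<omega>\<in>space M. P (block X t' N \<omega>)} = (\<Union>w\<in>{w. length w = N \<and> P w}. {\<omega>\<in>space M. block X t' N \<omega> = w})"
      by auto
    moreover have "prob (\<Union>w\<in>{w. length w = N \<and> P w}. {\<omega>\<in>space M. block X t' N \<omega> = w}) = (\<Sum>w\<in>{w. length w = N \<and> P w}. prob {\<omega>\<in>space M. block X t' N \<omega> = w})"
      using fin
      by (intro measure_finite_Union) (auto simp: disjoint_family_on_def block_ev)
    ultimately show ?thesis by simp
  qed
  then show ?thesis by (simp only: st[of t])
qed

end

context snp begin

lemma ZU_eq_iff:
  assumes "k \<notin> U"
  shows "ZU Z (insert k U) \<omega> = ZU Z (insert k U) \<omega>' \<longleftrightarrow> ZU Z U \<omega> = ZU Z U \<omega>' \<and> Z k \<omega> = Z k \<omega>'"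
proof
  assume h: "ZU Z (insert k U) \<omega> = ZU Z (insert k U) \<omega>'"
  have 1: "Z k \<omega> = Z k \<omega>'" using fun_cong[OF h, of k] by (simp add: ZU_def)
  have "ZU Z U \<omega> j = ZU Z U \<omega>' j" for j
    using fun_cong[OF h, of j] assms by (cases "j = k") (simp_all add: ZU_def)
  with 1 show "ZU Z U \<omega> = ZU Z U \<omega>' \<and> Z k \<omega> = Z k \<omega>'" by auto
next
  assume "ZU Z U \<omega> = ZU Z U \<omega>' \<and> Z k \<omega> = Z k \<omega>'"
  then show "ZU Z (insert k U) \<omega> = ZU Z (insert k U) \<omega>'" by (simp add: ZU_insert)
qed

lemma ZU_pre:
  assumes U: "finite U" and v: "\<And>k. v k \<Longrightarrow> k \<in> U"
  shows "prob (ZU Z U -` {v} \<inter> space M) = (1/2) ^ card U"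
proof (cases "U = {}")
  case True
  then have "ZU Z U -` {v} \<inter> space M = space M" using v by (auto simp: ZU_def fun_eq_iff)
  then show ?thesis using True by (simp add: prob_space)
next
  case False
  have eq: "ZU Z U -` {v} \<inter> space M = (\<Inter>k\<in>U. Z k -` {v k} \<inter> space M)"
  proof (intro equalityI subsetI)
    fix \<omega> assume "\<omega> \<in> ZU Z U -` {v} \<inter> space M"
    then have "ZU Z U \<omega> = v" "\<omega> \<in> space M" by auto
    then show "\<omega> \<in> (\<Inter>k\<in>U. Z k -` {v k} \<inter> space M)" by (auto simp: ZU_def)
  next
    fix \<omega> assume a: "\<omega> \<in> (\<Inter>k\<in>U. Z k -` {v k} \<inter> space M)"
    then have "\<omega> \<in> space M" using False by auto
    moreover have "ZU Z U \<omega> j = v j" for j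
    proof (cases "j \<in> U")
      case True
      then have "\<omega> \<in> Z j -` {v j} \<inter> space M" using a by blast
      then show ?thesis using True by (simp add: ZU_def)
    next
      case False then show ?thesis using v[of j] by (auto simp: ZU_def)
    qed
    ultimately show "\<omega> \<in> ZU Z U -` {v} \<inter> space M" by auto
  qed
  have "prob (\<Inter>k\<in>U. Z k -` {v k} \<inter> space M) = (\<Prod>k\<in>U. prob (Z k -` {v k} \<inter> space M))"
    by (rule indep_varsD[OF indep]) (use False U in auto)
  also have "\<dots> = (\<Prod>k\<in>U. 1/2)"
  proof (rule prod.cong[OF refl])
    fix k
    have "Z k -` {v k} \<inter> space M = {\<omega>\<in>space M. Z k \<omega> = v k}" by auto
    then show "prob (Z k -` {v k} \<inter> space M) = 1/2" using Zf[of k] Zt[of k] by (cases "v k") auto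
  qed
  finally show ?thesis using eq by simp
qed

lemma ent_ZU:
  assumes U: "finite U"
  shows "ent M (ZU Z U) = card U * ln 2"
proof -
  define A where "A = (\<lambda>V k. k \<in> V) ` Pow U"
  have finA: "finite A" using U by (simp add: A_def)
  have inj: "inj_on (\<lambda>V k. k \<in> V) (Pow U)" by (auto simp: inj_on_def fun_eq_iff)
  have cardA: "card A = 2 ^ card U" unfolding A_def card_image[OF inj] using U by (simp add: card_Pow)
  have sub: "ZU Z U ` space M \<subseteq> A"
  proof
    fix v assume "v \<in> ZU Z U ` space M"
    then obtain \<omega> where "v = ZU Z U \<omega>" by auto
    then have "v = (\<lambda>k. k \<in> {k\<in>U. Z k \<omega>})" by (auto simp: ZU_def fun_eq_iff)
    then show "v \<in> A" unfolding A_def by blast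
  qed
  have pre: "prob (ZU Z U -` {v} \<inter> space M) = (1/2) ^ card U" if "v \<in> A" for v
    using that U by (intro ZU_pre) (auto simp: A_def)
  have "ent M (ZU Z U) = - (\<Sum>v\<in>A. prob (ZU Z U -` {v} \<inter> space M) * ln (prob (ZU Z U -` {v} \<inter> space M)))"
    by (rule ent_superset[OF finA sub])
  also have "\<dots> = - (real (card A) * ((1/2) ^ card U * ln ((1/2) ^ card U)))"
    by (simp add: pre)
  also have "\<dots> = card U * ln 2"
    by (simp add: cardA ln_realpow ln_div power_one_over[symmetric] power_mult_distrib[symmetric])
  finally show ?thesis .
qed


lemma ent_C:
  fixes B :: "'w \<Rightarrow> 'b" and g :: "'b \<Rightarrow> bool" and Zk :: "'w \<Rightarrow> bool"
  assumes B: "simple_function M B" and Zk: "simple_function M Zk"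
  shows "ent M (\<lambda>\<omega>. (Zk \<omega>, B \<omega>)) \<le> ent M B + hb (prob {\<omega>\<in>space M. Zk \<omega> \<noteq> g (B \<omega>)})"
proof -
  let ?W = "\<lambda>\<omega>. g (B \<omega>)"
  let ?D = "\<lambda>\<omega>. Zk \<omega> \<noteq> g (B \<omega>)"
  have W: "simple_function M ?W" using B by (rule simple_function_compose1)
  have D: "simple_function M ?D"
    using simple_function_compose1[OF simple_function_Pair[OF Zk W], of "\<lambda>(a,b). a \<noteq> b"] by simp
  have "ent M (\<lambda>\<omega>. (Zk \<omega>, B \<omega>, ?W \<omega>)) + ent M ?W \<le> ent M (\<lambda>\<omega>. (Zk \<omega>, ?W \<omega>)) + ent M (\<lambda>\<omega>. (B \<omega>, ?W \<omega>))"
    by (rule ent_submod[OF Zk B W])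
  moreover have "ent M (\<lambda>\<omega>. (Zk \<omega>, B \<omega>, ?W \<omega>)) = ent M (\<lambda>\<omega>. (Zk \<omega>, B \<omega>))" by (rule ent_eq) auto
  moreover have "ent M (\<lambda>\<omega>. (B \<omega>, ?W \<omega>)) = ent M B" by (rule ent_eq) auto
  moreover have "ent M (\<lambda>\<omega>. (Zk \<omega>, ?W \<omega>)) = ent M (\<lambda>\<omega>. (?D \<omega>, ?W \<omega>))" by (rule ent_eq) auto
  moreover have "ent M (\<lambda>\<omega>. (?D \<omega>, ?W \<omega>)) \<le> ent M ?D + ent M ?W" by (rule ent_subadd[OF D W])
  moreover have "ent M ?D = hb (prob {\<omega>\<in>space M. ?D \<omega>})" by (rule ent_bool[OF D])
  ultimately show ?thesis by linarith
qed

lemma ent_B: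
  fixes B :: "'w \<Rightarrow> 'b"
  assumes U: "finite U" and B: "simple_function M B"
  shows "ent M (\<lambda>\<omega>. (ZU Z U \<omega>, B \<omega>)) \<le> ent M B + (\<Sum>k\<in>U. ent M (\<lambda>\<omega>. (Z k \<omega>, B \<omega>)) - ent M B)"
  using U
proof (induction U rule: finite_induct)
  case empty
  have "ent M (\<lambda>\<omega>. (ZU Z {} \<omega>, B \<omega>)) = ent M B" by (rule ent_eq) (auto simp: ZU_def)
  then show ?case by simp
next
  case (insert k U)
  have "ent M (\<lambda>\<omega>. (ZU Z U \<omega>, Z k \<omega>, B \<omega>)) + ent M B \<le> ent M (\<lambda>\<omega>. (ZU Z U \<omega>, B \<omega>)) + ent M (\<lambda>\<omega>. (Z k \<omega>, B \<omega>))"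
    by (rule ent_submod[OF sf_ZU[OF insert(1)] sf_Z B])
  moreover have "ent M (\<lambda>\<omega>. (ZU Z (insert k U) \<omega>, B \<omega>)) = ent M (\<lambda>\<omega>. (ZU Z U \<omega>, Z k \<omega>, B \<omega>))"
  proof (rule ent_eq)
    fix \<omega> \<omega>'
    have "ZU Z (insert k U) \<omega> = ZU Z (insert k U) \<omega>' \<longleftrightarrow> ZU Z U \<omega> = ZU Z U \<omega>' \<and> Z k \<omega> = Z k \<omega>'"
      by (rule ZU_eq_iff[OF insert(2)])
    then show "((ZU Z (insert k U) \<omega>, B \<omega>) = (ZU Z (insert k U) \<omega>', B \<omega>')) =
          ((ZU Z U \<omega>, Z k \<omega>, B \<omega>) = (ZU Z U \<omega>', Z k \<omega>', B \<omega>'))" by auto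
  qed
  ultimately show ?case using insert by simp
qed

end

context snp begin

lemma ent_A:
  assumes U: "finite U"
  shows "ent M (\<lambda>\<omega>. (ZU Z U \<omega>, block X 0 (m*n) \<omega>)) \<le>
    ent M (ZU Z U) + (\<Sum>i<m. ent M (\<lambda>\<omega>. (ZU Z U \<omega>, block X (int (i*n)) n \<omega>)) - ent M (ZU Z U))"
proof (induction m)
  case 0
  have "ent M (\<lambda>\<omega>. (ZU Z U \<omega>, block X 0 (0*n) \<omega>)) = ent M (ZU Z U)" by (rule ent_eq) auto
  then show ?case by simp
next
  case (Suc m)
  let ?Y = "ZU Z U" and ?C = "block X 0 (m*n)" and ?B = "block X (int (m*n)) n"
  have "ent M (\<lambda>\<omega>. (?C \<omega>, ?B \<omega>, ?Y \<omega>)) + ent M ?Y \<le> ent M (\<lambda>\<omega>. (?C \<omega>, ?Y \<omega>)) + ent M (\<lambda>\<omega>. (?B \<omega>, ?Y \<omega>))"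
    by (rule ent_submod[OF sf_block sf_block sf_ZU[OF U]])
  moreover have "ent M (\<lambda>\<omega>. (?Y \<omega>, block X 0 (Suc m*n) \<omega>)) = ent M (\<lambda>\<omega>. (?C \<omega>, ?B \<omega>, ?Y \<omega>))"
  proof (rule ent_eq)
    fix \<omega> \<omega>'
    have e: "block X 0 (Suc m*n) \<omega>'' = ?C \<omega>'' @ ?B \<omega>''" for \<omega>''
      using block_add[of X "m*n" n \<omega>''] by (simp add: add.commute)
    show "((?Y \<omega>, block X 0 (Suc m*n) \<omega>) = (?Y \<omega>', block X 0 (Suc m*n) \<omega>')) =
          ((?C \<omega>, ?B \<omega>, ?Y \<omega>) = (?C \<omega>', ?B \<omega>', ?Y \<omega>'))"
      unfolding e by (auto simp: append_eq_append_conv)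
  qed
  moreover have "ent M (\<lambda>\<omega>. (?C \<omega>, ?Y \<omega>)) = ent M (\<lambda>\<omega>. (?Y \<omega>, ?C \<omega>))" by (rule ent_swap)
  moreover have "ent M (\<lambda>\<omega>. (?B \<omega>, ?Y \<omega>)) = ent M (\<lambda>\<omega>. (?Y \<omega>, ?B \<omega>))" by (rule ent_swap)
  ultimately show ?case using Suc by simp
qed

lemma key:
  fixes s :: "nat \<Rightarrow> 'x list \<Rightarrow> bool"
  assumes U: "finite U" and q: "0 \<le> q" "q \<le> 1/2"
    and h: "\<And>k i. k \<in> U \<Longrightarrow> i < m \<Longrightarrow> prob {\<omega>\<in>space M. Z k \<omega> \<noteq> s k (block X (int (i*n)) n \<omega>)} \<le> q"
  shows "block_entropy M X (m*n) \<le> card U * ln 2 + m * (block_entropy M X n + card U * hb q - card U * ln 2)"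
proof -
  have step: "ent M (\<lambda>\<omega>. (ZU Z U \<omega>, block X (int (i*n)) n \<omega>)) - ent M (ZU Z U)
     \<le> block_entropy M X n + card U * hb q - card U * ln 2" if i: "i < m" for i
  proof -
    let ?B = "block X (int (i*n)) n"
    have "ent M (\<lambda>\<omega>. (ZU Z U \<omega>, ?B \<omega>)) \<le> ent M ?B + (\<Sum>k\<in>U. ent M (\<lambda>\<omega>. (Z k \<omega>, ?B \<omega>)) - ent M ?B)"
      by (rule ent_B[OF U sf_block])
    also have "(\<Sum>k\<in>U. ent M (\<lambda>\<omega>. (Z k \<omega>, ?B \<omega>)) - ent M ?B) \<le> (\<Sum>k\<in>U. hb q)"
    proof (rule sum_mono)
      fix k assume k: "k \<in> U"
      have "ent M (\<lambda>\<omega>. (Z k \<omega>, ?B \<omega>)) \<le> ent M ?B + hb (prob {\<omega>\<in>space M. Z k \<omega> \<noteq> s k (?B \<omega>)})"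
        by (rule ent_C[OF sf_block sf_Z])
      also have "hb (prob {\<omega>\<in>space M. Z k \<omega> \<noteq> s k (?B \<omega>)}) \<le> hb q"
        using h[OF k i] q by (intro hb_mono) auto
      finally show "ent M (\<lambda>\<omega>. (Z k \<omega>, ?B \<omega>)) - ent M ?B \<le> hb q" by simp
    qed
    finally show ?thesis using ent_block[of "int (i*n)" n] ent_ZU[OF U] by simp
  qed
  have "block_entropy M X (m*n) = ent M (block X 0 (m*n))" by (simp add: ent_block)
  also have "\<dots> \<le> ent M (\<lambda>\<omega>. (ZU Z U \<omega>, block X 0 (m*n) \<omega>))"
    by (rule ent_mono_pair[OF sf_ZU[OF U] sf_block])
  also have "\<dots> \<le> ent M (ZU Z U) + (\<Sum>i<m. ent M (\<lambda>\<omega>. (ZU Z U \<omega>, block X (int (i*n)) n \<omega>)) - ent M (ZU Z U))"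
    by (rule ent_A[OF U])
  also have "\<dots> \<le> ent M (ZU Z U) + (\<Sum>i<m. block_entropy M X n + card U * hb q - card U * ln 2)"
    using step by (intro add_left_mono sum_mono) auto
  finally show ?thesis using ent_ZU[OF U] by simp
qed

end

context snp begin

lemma sf_ev: "simple_function M f \<Longrightarrow> {\<omega>\<in>space M. P (f \<omega>)} \<in> events"
  using simple_functionD(2)[of M f "{x. P x}"] by (simp add: vimage_def Int_def conj_commute)

lemma approx:
  fixes s :: "nat \<Rightarrow> 'x list \<Rightarrow> bool"
  assumes conv: "\<And>t. (\<lambda>N. prob {\<omega>\<in>space M. s k (block X t N \<omega>) = Z k \<omega>}) \<longlonglongrightarrow> 1"
    and e: "0 < \<epsilon>"
    and p0: "\<delta> \<le> prob {\<omega>\<in>space M. s k (block X 0 n \<omega>) = Z k \<omega>}"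
  shows "prob {\<omega>\<in>space M. Z k \<omega> \<noteq> s k (block X t n \<omega>)} \<le> 1 - \<delta> + \<epsilon>"
proof -
  have "eventually (\<lambda>N. 1 - \<epsilon>/2 < prob {\<omega>\<in>space M. s k (block X t N \<omega>) = Z k \<omega>}) sequentially"
    using e by (intro order_tendstoD(1)[OF conv]) auto
  moreover have "eventually (\<lambda>N. 1 - \<epsilon>/2 < prob {\<omega>\<in>space M. s k (block X 0 N \<omega>) = Z k \<omega>}) sequentially"
    using e by (intro order_tendstoD(1)[OF conv]) auto
  moreover have "eventually (\<lambda>N. n \<le> N) sequentially" by (rule eventually_ge_at_top)
  ultimately have "eventually (\<lambda>N. 1 - \<epsilon>/2 < prob {\<omega>\<in>space M. s k (block X t N \<omega>) = Z k \<omega>} \<and>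
      1 - \<epsilon>/2 < prob {\<omega>\<in>space M. s k (block X 0 N \<omega>) = Z k \<omega>} \<and> n \<le> N) sequentially"
    by eventually_elim auto
  then obtain N where Gt: "1 - \<epsilon>/2 < prob {\<omega>\<in>space M. s k (block X t N \<omega>) = Z k \<omega>}"
    and G0: "1 - \<epsilon>/2 < prob {\<omega>\<in>space M. s k (block X 0 N \<omega>) = Z k \<omega>}" and nN: "n \<le> N"
    unfolding eventually_sequentially by blast
  define G where "G t' = {\<omega>\<in>space M. s k (block X t' N \<omega>) = Z k \<omega>}" for t'
  define E where "E t' = {\<omega>\<in>space M. s k (take n (block X t' N \<omega>)) = s k (block X t' N \<omega>)}" for t'
  define A where "A t' = {\<omega>\<in>space M. s k (block X t' n \<omega>) = Z k \<omega>}" for t'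
  have sfp: "simple_function M (\<lambda>\<omega>. (block X t' N' \<omega>, Z k \<omega>))" for t' N'
    by (rule simple_function_Pair[OF sf_block sf_Z])
  have GS: "G t' \<in> events" for t'
    unfolding G_def using sf_ev[OF sfp[of t' N], of "\<lambda>(w, z). s k w = z"] by simp
  have AS: "A t' \<in> events" for t'
    unfolding A_def using sf_ev[OF sfp[of t' n], of "\<lambda>(w, z). s k w = z"] by simp
  have ES: "E t' \<in> events" for t'
    unfolding E_def by (rule sf_ev[OF sf_block])
  have Eeq: "prob (E t) = prob (E 0)"
    unfolding E_def by (rule stat_event)
  have bt: "block X t' n \<omega> = take n (block X t' N \<omega>)" for t' \<omega>
    using nN by (rule block_take)
  have "E t \<subseteq> (A t) \<union> (space M - G t)"
    by (auto simp: E_def A_def G_def bt)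
  then have "prob (E t) \<le> prob (A t) + prob (space M - G t)"
    using AS GS ES by (meson measure_Un_le order.trans finite_measure_mono sets.Un sets.Diff sets.top)
  then have 1: "prob (E t) \<le> prob (A t) + \<epsilon>/2"
    using prob_compl[OF GS[of t]] Gt by (simp add: G_def)
  have "A 0 \<subseteq> (E 0) \<union> (space M - G 0)"
    by (auto simp: E_def A_def G_def bt)
  then have "prob (A 0) \<le> prob (E 0) + prob (space M - G 0)"
    using AS GS ES by (meson measure_Un_le order.trans finite_measure_mono sets.Un sets.Diff sets.top)
  then have 2: "prob (A 0) \<le> prob (E 0) + \<epsilon>/2"
    using prob_compl[OF GS[of 0]] G0 by (simp add: G_def)
  have "{\<omega>\<in>space M. Z k \<omega> \<noteq> s k (block X t n \<omega>)} = space M - A t" by (auto simp: A_def)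
  then have "prob {\<omega>\<in>space M. Z k \<omega> \<noteq> s k (block X t n \<omega>)} = 1 - prob (A t)"
    using prob_compl[OF AS] by simp
  moreover have "\<delta> \<le> prob (A 0)" using p0 by (simp add: A_def)
  ultimately show ?thesis using 1 2 Eeq by linarith
qed

end

lemma telescope:
  "block_entropy M X n - block_entropy M X (2^J*n) / 2^J = (\<Sum>j<J. excess_entropy M X (2^j*n) / 2^(j+1))"
proof (induction J)
  case 0
  then show ?case by simp
next
  case (Suc J)
  have e: "2 ^ Suc J * n = 2 * (2^J * n)" by simp
  have "block_entropy M X (2^J*n) / 2^J - block_entropy M X (2^Suc J*n) / 2^Suc J
      = excess_entropy M X (2^J*n) / 2^(J+1)"
    unfolding excess_entropy_def e by (simp add: field_simps)
  then show ?case using Suc by simp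
qed

theorem theorem2:
  fixes M :: "'w measure"
    and X :: "int \<Rightarrow> 'w \<Rightarrow> 'x::finite"
    and Z :: "nat \<Rightarrow> 'w \<Rightarrow> bool"
    and s :: "nat \<Rightarrow> 'x list \<Rightarrow> bool"
    and \<beta> \<delta> :: real
  assumes "prob_space M"
    and "\<And>i. X i \<in> measurable M (count_space UNIV)"
    and "stationary_proc M X"
    and "prob_space.indep_vars M (\<lambda>_. count_space UNIV) Z UNIV"
    and "\<And>k. measure M {\<omega>\<in>space M. Z k \<omega> = False} = 1/2"
    and "\<And>k. measure M {\<omega>\<in>space M. Z k \<omega> = True} = 1/2"
    and "\<And>k t. (\<lambda>n. measure M {\<omega>\<in>space M. s k (block X t n \<omega>) = Z k \<omega>}) \<longlonglongrightarrow> 1"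
    and "0 < \<beta>" and "\<beta> < 1" and "1/2 < \<delta>" and "\<delta> < 1"
    and "liminf (\<lambda>n. ecard {k. measure M {\<omega>\<in>space M. s k (block X 0 n \<omega>) = Z k \<omega>} \<ge> \<delta>}
                      / ereal (real n powr \<beta>)) > 0"
  shows "limsup (\<lambda>n. ereal (excess_entropy M X n / real n powr \<beta>)) > 0"
proof (rule ccontr)
  assume neg: "\<not> limsup (\<lambda>n. ereal (excess_entropy M X n / real n powr \<beta>)) > 0"
  interpret snp M X Z
    by (rule snp.intro[OF assms(1) snp_axioms.intro[OF assms(2-6)]])
  define Ud where "Ud n = {k. measure M {\<omega>\<in>space M. s k (block X 0 n \<omega>) = Z k \<omega>} \<ge> \<delta>}" for n
  define H where "H n = block_entropy M X n" for n
  define \<eta> where "\<eta> = (\<delta> - 1/2) / 2"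
  define q where "q = 1 - \<delta> + \<eta>"
  have \<eta>: "0 < \<eta>" using assms(10) by (simp add: \<eta>_def)
  have q: "0 \<le> q" "q < 1/2" using assms(10,11) unfolding q_def \<eta>_def by (auto simp: field_simps)
  define a0 where "a0 = ln 2 - hb q"
  have a0: "0 < a0" using hb_lt[OF q] by (simp add: a0_def)
  obtain J :: nat where J: "2 * ln 2 / a0 < 2 ^ J"
    using real_arch_pow[of 2 "2 * ln 2 / a0"] by auto
  define m :: nat where "m = 2 ^ J"
  have m: "0 < m" by (simp add: m_def)
  have lnm: "ln 2 / m \<le> a0 / 2"
    using J a0 by (simp add: m_def field_simps)
  define a where "a = a0 - ln 2 / m"
  have a: "a0 / 2 \<le> a" using lnm by (simp add: a_def)
  have apos: "0 < a" using a a0 by linarith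
  have bound: "real (card U) * a \<le> H n - H (m*n) / m" if U: "finite U" "U \<subseteq> Ud n" for U n
  proof -
    have hq: "prob {\<omega>\<in>space M. Z k \<omega> \<noteq> s k (block X (int (i*n)) n \<omega>)} \<le> q" if k: "k \<in> U" for k i
    proof -
      have "\<delta> \<le> prob {\<omega>\<in>space M. s k (block X 0 n \<omega>) = Z k \<omega>}" using k U by (auto simp: Ud_def)
      then show ?thesis unfolding q_def by (rule approx[OF assms(7) \<eta>])
    qed
    have "H (m*n) \<le> card U * ln 2 + m * (H n + card U * hb q - card U * ln 2)"
      unfolding H_def by (rule key[OF U(1) q(1)]) (use q hq in auto)
    then have "H (m*n) / m \<le> card U * ln 2 / m + (H n + card U * hb q - card U * ln 2)"
      using m by (simp add: field_simps)
    then show ?thesis unfolding a_def a0_def by (simp add: algebra_simps)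
  qed
  have tele: "H n - H (m*n) / m = (\<Sum>j<J. excess_entropy M X (2^j*n) / 2^(j+1))" for n
    using telescope[of M X n J] by (simp add: H_def m_def)
  obtain c0 where c0: "0 < c0" "ereal c0 < liminf (\<lambda>n. ecard (Ud n) / ereal (real n powr \<beta>))"
    using ereal_dense2[OF assms(12)] unfolding Ud_def by auto
  have ev1: "eventually (\<lambda>n. ereal c0 < ecard (Ud n) / ereal (real n powr \<beta>)) sequentially"
    by (rule less_LiminfD[OF c0(2)])
  define \<epsilon> where "\<epsilon> = c0 * a / (2 * (real J + 1))"
  have \<epsilon>: "0 < \<epsilon>" using c0 apos by (simp add: \<epsilon>_def)
  have "limsup (\<lambda>n. ereal (excess_entropy M X n / real n powr \<beta>)) < ereal \<epsilon>"
    using neg \<epsilon> by (meson ereal_less(2) not_less order.strict_trans1 zero_ereal_def)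
  then have ev2: "eventually (\<lambda>n. ereal (excess_entropy M X n / real n powr \<beta>) < ereal \<epsilon>) sequentially"
    by (rule Limsup_lessD)
  obtain N where N1: "\<And>n. N \<le> n \<Longrightarrow> ereal c0 < ecard (Ud n) / ereal (real n powr \<beta>)"
    and N2: "\<And>n. N \<le> n \<Longrightarrow> excess_entropy M X n / real n powr \<beta> < \<epsilon>"
    using eventually_conj[OF ev1 ev2] unfolding eventually_sequentially by auto
  define n where "n = N + 1"
  have n: "N \<le> n" "1 \<le> n" by (simp_all add: n_def)
  have npos: "0 < real n powr \<beta>" using n by simp
  have trm: "excess_entropy M X (2^j*n) / 2^(j+1) \<le> \<epsilon> * real n powr \<beta>" for j
  proof -
    let ?k = "2^j*n"
    have "1 * n \<le> 2^j * n" by (intro mult_right_mono) auto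
    then have k: "N \<le> ?k" using n by linarith
    have kpos: "0 < real ?k powr \<beta>" using n by simp
    have "excess_entropy M X ?k < \<epsilon> * real ?k powr \<beta>"
      using N2[OF k] kpos by (simp add: divide_less_eq)
    also have "real ?k powr \<beta> = (2^j) powr \<beta> * real n powr \<beta>"
      by (simp add: powr_mult)
    also have "(2^j :: real) powr \<beta> \<le> 2^j"
    proof -
      have "(2^j :: real) powr \<beta> \<le> (2^j) powr 1"
        using assms(9) by (intro powr_mono) auto
      then show ?thesis by simp
    qed
    then have "\<epsilon> * ((2^j) powr \<beta> * real n powr \<beta>) \<le> \<epsilon> * (2^j * real n powr \<beta>)"
      using \<epsilon> npos by (intro mult_left_mono mult_right_mono) auto
    finally have "excess_entropy M X ?k < \<epsilon> * (2^j * real n powr \<beta>)" .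
    then have "excess_entropy M X ?k / 2^(j+1) \<le> \<epsilon> * (2^j * real n powr \<beta>) / 2^(j+1)"
      by (intro divide_right_mono) auto
    also have "\<dots> \<le> \<epsilon> * real n powr \<beta>"
      using \<epsilon> npos by (simp add: field_simps)
    finally show ?thesis .
  qed
  have "H n - H (m*n) / m \<le> (\<Sum>j<J. \<epsilon> * real n powr \<beta>)"
    unfolding tele by (rule sum_mono) (rule trm)
  then have sumb: "H n - H (m*n) / m \<le> real J * \<epsilon> * real n powr \<beta>" by simp
  have cardb: "real (card U) \<le> c0 * real n powr \<beta> / 2" if U: "finite U" "U \<subseteq> Ud n" for U
  proof -
    have "real (card U) * a \<le> real J * \<epsilon> * real n powr \<beta>" using bound[OF U] sumb by linarith
    then have "real (card U) \<le> real J * \<epsilon> * real n powr \<beta> / a" using apos by (simp add: field_simps)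
    also have "\<dots> = c0 * real n powr \<beta> / 2 * (real J / (real J + 1))"
    proof -
      define K where "K = real J + 1"
      have j: "K > 0" by (simp add: K_def)
      have "real J * (c0 * a / (2 * K)) * real n powr \<beta> / a = c0 * real n powr \<beta> / 2 * (real J / K)"
        using apos j by (simp add: field_simps)
      then show ?thesis by (simp add: K_def \<epsilon>_def)
    qed
    also have "\<dots> \<le> c0 * real n powr \<beta> / 2"
      using c0 npos by (intro mult_left_le) auto
    finally show ?thesis .
  qed
  have fin: "finite (Ud n)"
  proof (rule ccontr)
    assume "infinite (Ud n)"
    then obtain B where B: "finite B" "card B = nat \<lceil>c0 * real n powr \<beta>\<rceil>" "B \<subseteq> Ud n"
      using infinite_arbitrarily_large by blast
    have "c0 * real n powr \<beta> \<le> real (card B)" using B(2) by linarith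
    moreover have "real (card B) \<le> c0 * real n powr \<beta> / 2" by (rule cardb[OF B(1,3)])
    moreover have "0 < c0 * real n powr \<beta>" using c0 npos by simp
    ultimately show False by linarith
  qed
  have "ereal c0 < ereal (real (card (Ud n)) / real n powr \<beta>)"
    using N1[OF n(1)] fin n(2) by (simp add: ecard_def)
  then have "c0 * real n powr \<beta> < real (card (Ud n))" using npos by (simp add: field_simps)
  moreover have "real (card (Ud n)) \<le> c0 * real n powr \<beta> / 2" by (rule cardb[OF fin order.refl])
  moreover have "0 < c0 * real n powr \<beta>" using c0 npos by simp
  ultimately show False by linarith
qed

end
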